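(* Let $\mathcal{H}=(V,E)$ be a linear hypergraph with $n$ vertices satisfying $\mathrm{ar}(\mathcal{H})\ge n^{1/2}$. Then $\mathrm{q}(\mathcal{H})\le n$.
   Context: A hypergraph $\mathcal{H}=(V,E)$ has a finite vertex set $V$ and a finite set $E$ of nonempty subsets of $V$ (hyperedges); linear means distinct hyperedges share at most one vertex. The antirank $\mathrm{ar}(\mathcal{H})$ is the minimum cardinality of a hyperedge ($\infty$ if there are none). The chromatic index $\mathrm{q}(\mathcal{H})$ is the least number of colors in a coloring of hyperedges where distinct intersecting hyperedges get different colors. *)

theory Defs
  imports "HOL-Analysis.Analysis"
begin

definition hypergraph :: "'a set \<Rightarrow> 'a set set \<Rightarrow> bool" where
  "hypergraph V E \<longleftrightarrow> finite V \<and> finite E \<and> (\<forall>e\<in>E. e \<noteq> {} \<and> e \<subseteq> V)"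

definition linear_hypergraph :: "'a set \<Rightarrow> 'a set set \<Rightarrow> bool" where
  "linear_hypergraph V E \<longleftrightarrow> hypergraph V E \<and>
     (\<forall>e\<in>E. \<forall>f\<in>E. e \<noteq> f \<longrightarrow> card (e \<inter> f) \<le> 1)"

definition antirank :: "'a set set \<Rightarrow> ereal" where
  "antirank E = (if E = {} then \<infinity> else ereal (real (Min (card ` E))))"

definition proper_edge_coloring :: "'a set set \<Rightarrow> nat \<Rightarrow> ('a set \<Rightarrow> nat) \<Rightarrow> bool" where
  "proper_edge_coloring E k c \<longleftrightarrow> (\<forall>e\<in>E. c e < k) \<and>
     (\<forall>e\<in>E. \<forall>f\<in>E. e \<noteq> f \<and> e \<inter> f \<noteq> {} \<longrightarrow> c e \<noteq> c f)"

definition chromatic_index :: "'a set set \<Rightarrow> nat" where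
  "chromatic_index E = (LEAST k. \<exists>c. proper_edge_coloring E k c)"

end

theory Submission imports Defs begin

definition Dv :: "'a set set \<Rightarrow> 'a \<Rightarrow> 'a set set" where
  "Dv S v = {f\<in>S. v\<in>f}"
definition Nb :: "'a set set \<Rightarrow> 'a set \<Rightarrow> 'a set set" where
  "Nb S e = {f\<in>S. f\<noteq>e \<and> f\<inter>e\<noteq>{}}"

lemma Nb_eq: "Nb S e = (\<Union>v\<in>e. Dv S v - {e})"
  unfolding Nb_def Dv_def by blast

locale lh =
  fixes V :: "'a set" and S :: "'a set set" and n :: nat
  assumes finV: "finite V" and cardV: "card V = n" and finS: "finite S"
    and sub: "\<And>e. e\<in>S \<Longrightarrow> e \<subseteq> V" and nempty: "\<And>e. e\<in>S \<Longrightarrow> e\<noteq>{}"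
    and lin: "\<And>e f. e\<in>S \<Longrightarrow> f\<in>S \<Longrightarrow> e\<noteq>f \<Longrightarrow> card (e\<inter>f) \<le> 1"
begin

lemma finE: "e\<in>S \<Longrightarrow> finite e"
  using sub finV finite_subset by blast

lemma meet1: assumes "e\<in>S" "f\<in>S" "e\<noteq>f" "v\<in>e" "v\<in>f" shows "e\<inter>f = {v}"
proof -
  have "finite (e\<inter>f)" using finE assms by blast
  moreover have "card (e\<inter>f) \<le> Suc 0" using lin assms by simp
  ultimately show ?thesis using assms(4,5) card_le_Suc0_iff_eq by blast
qed

lemma star:
  assumes e: "e\<in>S" and v: "v\<in>e" and kb: "\<forall>f\<in>S. k \<le> card f"
  defines "U \<equiv> \<Union>f\<in>(Dv S v - {e}). f - {v}"
  shows "card U = (\<Sum>f\<in>Dv S v - {e}. card f - 1)"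
    and "card (Dv S v - {e}) * (k-1) \<le> card U"
    and "U \<inter> e = {}" and "U \<union> e \<subseteq> V" and "card U + card e \<le> n"
proof -
  have fin: "finite (Dv S v - {e})" using finS by (simp add: Dv_def)
  have c1: "card U = (\<Sum>f\<in>Dv S v - {e}. card (f - {v}))"
    unfolding U_def
  proof (rule card_UN_disjoint[OF fin])
    show "\<forall>i\<in>Dv S v - {e}. finite (i - {v})" using finE by (auto simp: Dv_def)
    show "\<forall>i\<in>Dv S v - {e}. \<forall>j\<in>Dv S v - {e}. i \<noteq> j \<longrightarrow> (i - {v}) \<inter> (j - {v}) = {}"
      using meet1 by (auto simp: Dv_def)
  qed
  also have "\<dots> = (\<Sum>f\<in>Dv S v - {e}. card f - 1)"
    by (rule sum.cong) (auto simp: Dv_def)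
  finally show cU: "card U = (\<Sum>f\<in>Dv S v - {e}. card f - 1)" .
  have "card (Dv S v - {e}) * (k-1) \<le> (\<Sum>f\<in>Dv S v - {e}. card f - 1)"
    using sum_bounded_below[of "Dv S v - {e}" "k-1" "\<lambda>f. card f - 1"] kb
    by (auto simp: Dv_def diff_le_mono)
  then show "card (Dv S v - {e}) * (k-1) \<le> card U" using cU by simp
  show ui: "U \<inter> e = {}" unfolding U_def using meet1 e v by (auto simp: Dv_def)
  show us: "U \<union> e \<subseteq> V" unfolding U_def using sub e by (auto simp: Dv_def)
  have "finite U" using us finV finite_subset by blast
  then have cu: "card (U \<union> e) = card U + card e" using ui card_Un_disjoint finE e by blast
  have "card (U \<union> e) \<le> n" using card_mono[OF finV us] cardV by simp
  then show "card U + card e \<le> n" using cu by simp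
qed

lemma nb_card: assumes e: "e\<in>S" shows "card (Nb S e) = (\<Sum>v\<in>e. card (Dv S v - {e}))"
proof -
  have "Nb S e = (\<Union>v\<in>e. Dv S v - {e})" by (rule Nb_eq)
  moreover have "card (\<Union>v\<in>e. Dv S v - {e}) = (\<Sum>v\<in>e. card (Dv S v - {e}))"
  proof (rule card_UN_disjoint)
    show "finite e" using finE e .
    show "\<forall>i\<in>e. finite (Dv S i - {e})" using finS by (simp add: Dv_def)
    show "\<forall>i\<in>e. \<forall>j\<in>e. i \<noteq> j \<longrightarrow> (Dv S i - {e}) \<inter> (Dv S j - {e}) = {}"
    proof (intro ballI impI)
      fix i j assume ij: "i\<in>e" "j\<in>e" "i\<noteq>j"
      show "(Dv S i - {e}) \<inter> (Dv S j - {e}) = {}"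
      proof (rule ccontr)
        assume "(Dv S i - {e}) \<inter> (Dv S j - {e}) \<noteq> {}"
        then obtain f where f: "f\<in>S" "f\<noteq>e" "i\<in>f" "j\<in>f" by (auto simp: Dv_def)
        then have "f \<inter> e = {i}" using meet1[of f e i] e ij by blast
        moreover have "j \<in> f \<inter> e" using f ij by simp
        ultimately show False using ij by simp
      qed
    qed
  qed
  ultimately show ?thesis by simp
qed

end

lemma sum_eq_lb:
  fixes g :: "'b \<Rightarrow> nat"
  assumes "finite A" "\<forall>x\<in>A. a \<le> g x" "sum g A \<le> card A * a"
  shows "\<forall>x\<in>A. g x = a"
proof -
  have "sum (\<lambda>x. g x - a) A = sum g A - sum (\<lambda>x. a) A"
    using sum_subtractf_nat[of A "\<lambda>x. a" g] assms(2) by simp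
  also have "\<dots> = 0" using assms(3) by simp
  finally show ?thesis using assms(1,2) by (simp add: sum_eq_0_iff) (auto intro: le_antisym)
qed

lemma sum_eq_ub:
  fixes g :: "'b \<Rightarrow> nat"
  assumes "finite A" "\<forall>x\<in>A. g x \<le> a" "card A * a \<le> sum g A"
  shows "\<forall>x\<in>A. g x = a"
proof -
  have "sum (\<lambda>x. a - g x) A = sum (\<lambda>x. a) A - sum g A"
    using sum_subtractf_nat[of A g "\<lambda>x. a"] assms(2) by simp
  also have "\<dots> = 0" using assms(3) by simp
  finally show ?thesis using assms(1,2) by (simp add: sum_eq_0_iff) (auto intro: le_antisym)
qed

context lh begin

end

lemma arith1:
  fixes n k :: nat
  assumes "n*(k-1) \<le> k*(n-k)" "k \<le> n" "2 \<le> k" "n \<le> k*k"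
  shows "k*k = n"
proof -
  obtain j where j: "k = Suc j" using assms(3) by (cases k) auto
  obtain m where m: "n = k + m" using assms(2) le_Suc_ex by blast
  have "(j+1+m)*j \<le> (j+1)*m" using assms(1) unfolding j m by simp
  then have "j*j + j \<le> m" by (simp add: algebra_simps)
  then show ?thesis using assms(4) unfolding j m by (simp add: algebra_simps)
qed

context lh begin

lemma extremal:
  assumes e: "e\<in>S" and kb: "\<forall>f\<in>S. k \<le> card f" and ce: "card e = k"
    and sq: "n \<le> k*k" and deg: "n \<le> card (Nb S e)"
  shows "k*k = n" "2 \<le> k"
    "\<forall>v\<in>e. card (Dv S v) = k+1 \<and> (\<forall>f\<in>Dv S v. card f = k) \<and> (\<forall>y\<in>V. \<exists>f\<in>Dv S v. y\<in>f)"
proof -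
  have fe: "finite e" using finE e .
  have k1: "1 \<le> k" using ce fe nempty[OF e] by (metis One_nat_def Suc_leI card_gt_0_iff)
  have kn: "k \<le> n" using card_mono[OF finV sub[OF e]] ce cardV by simp
  show k2: "2 \<le> k"
  proof (rule ccontr)
    assume "\<not> 2 \<le> k" then have k: "k = 1" using k1 by simp
    then have n1: "n = 1" using sq kn by simp
    have eV: "e = V" using card_subset_eq[OF finV sub[OF e]] ce k n1 cardV by simp
    have "Nb S e = {}"
    proof (rule ccontr)
      assume "Nb S e \<noteq> {}" then obtain f where f: "f\<in>S" "f\<noteq>e" unfolding Nb_def by auto
      have fV: "f \<subseteq> V" using sub f by simp
      have "card f \<ge> 1" using kb f k by auto
      then have "card f = card V" using card_mono[OF finV fV] cardV n1 by simp
      then have "f = V" using card_subset_eq[OF finV fV] by simp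
      then show False using f eV by simp
    qed
    then show False using deg n1 by simp
  qed
  define t where "t v = card (Dv S v - {e})" for v
  have tb: "t v * (k-1) \<le> n - k" if "v\<in>e" for v
    using star(2)[OF e that kb] star(5)[OF e that kb] ce unfolding t_def by simp
  have sum1: "(\<Sum>v\<in>e. t v * (k-1)) = card (Nb S e) * (k-1)"
    using nb_card[OF e] by (simp add: t_def sum_distrib_right)
  have A: "(\<Sum>v\<in>e. t v * (k-1)) \<le> k * (n-k)"
    using sum_bounded_above[of e "\<lambda>v. t v * (k-1)" "n-k"] tb ce by simp
  have B: "n * (k-1) \<le> card (Nb S e) * (k-1)" using deg by (rule mult_le_mono1)
  have "n*(k-1) \<le> k*(n-k)" using order.trans[OF B A[unfolded sum1]] .
  then show kk: "k*k = n" using arith1 kn k2 sq by blast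
  have eqs: "n * (k-1) = k*(n-k)" using kk by (simp add: algebra_simps diff_mult_distrib2)
  have tall: "\<forall>v\<in>e. t v * (k-1) = n-k"
  proof (rule sum_eq_ub[OF fe])
    show "\<forall>x\<in>e. t x * (k - 1) \<le> n - k" using tb by blast
    show "card e * (n - k) \<le> (\<Sum>v\<in>e. t v * (k-1))" using sum1 deg eqs ce
      by (metis mult_le_mono1)
  qed
  show "\<forall>v\<in>e. card (Dv S v) = k+1 \<and> (\<forall>f\<in>Dv S v. card f = k) \<and> (\<forall>y\<in>V. \<exists>f\<in>Dv S v. y\<in>f)"
  proof
    fix v assume v: "v\<in>e"
    have tv: "t v * (k-1) = n - k" using tall v by blast
    have "n - k = k * (k-1)" using kk by (simp add: diff_mult_distrib2)
    then have tk: "t v = k" using tv k2 by simp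
    have finD: "finite (Dv S v)" using finS by (simp add: Dv_def)
    have eD: "e \<in> Dv S v" using e v by (simp add: Dv_def)
    have cD: "card (Dv S v) = k + 1"
      using tk card_Diff_singleton[OF eD] finD eD unfolding t_def
      by (metis Suc_eq_plus1 card_Suc_Diff1)
    define U where "U = (\<Union>f\<in>(Dv S v - {e}). f - {v})"
    have s1: "card U = (\<Sum>f\<in>Dv S v - {e}. card f - 1)" using star(1)[OF e v kb] U_def by simp
    have s2: "card (Dv S v - {e}) * (k-1) \<le> card U" using star(2)[OF e v kb] U_def by simp
    have s3: "U \<inter> e = {}" using star(3)[OF e v kb] U_def by simp
    have s4: "U \<union> e \<subseteq> V" using star(4)[OF e v kb] U_def by simp
    have s5: "card U + card e \<le> n" using star(5)[OF e v kb] U_def by simp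
    have cU: "card U = n - k" using s2 s5 tv ce unfolding t_def by simp
    have finU: "finite U" using s4 finV finite_subset by blast
    have "card (U \<union> e) = n" using card_Un_disjoint[OF finU fe s3] cU ce kn by simp
    then have UV: "U \<union> e = V" using card_subset_eq[OF finV s4] cardV by simp
    have fk: "\<forall>f\<in>Dv S v - {e}. card f - 1 = k - 1"
    proof (rule sum_eq_lb)
      show "finite (Dv S v - {e})" using finD by simp
      show "\<forall>x\<in>Dv S v - {e}. k - 1 \<le> card x - 1" using kb by (simp add: Dv_def diff_le_mono)
      show "(\<Sum>f\<in>Dv S v - {e}. card f - 1) \<le> card (Dv S v - {e}) * (k - 1)"
        using s1 cU tv unfolding t_def by simp
    qed
    have "\<forall>f\<in>Dv S v. card f = k"
    proof
      fix f assume f: "f \<in> Dv S v"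
      show "card f = k"
      proof (cases "f = e")
        case True then show ?thesis using ce by simp
      next
        case False
        then have "card f - 1 = k - 1" using fk f by simp
        moreover have "k \<le> card f" using kb f by (simp add: Dv_def)
        ultimately show ?thesis using k2 by simp
      qed
    qed
    moreover have "\<forall>y\<in>V. \<exists>f\<in>Dv S v. y\<in>f"
    proof
      fix y assume "y\<in>V"
      then have "y \<in> U \<or> y \<in> e" using UV by auto
      then show "\<exists>f\<in>Dv S v. y\<in>f"
      proof
        assume "y\<in>U"
        then obtain f where "f \<in> Dv S v - {e}" "y \<in> f" unfolding U_def by auto
        then show ?thesis by auto
      next
        assume "y\<in>e" then show ?thesis using eD by auto
      qed
    qed
    ultimately show "card (Dv S v) = k+1 \<and> (\<forall>f\<in>Dv S v. card f = k) \<and> (\<forall>y\<in>V. \<exists>f\<in>Dv S v. y\<in>f)"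
      using cD by simp
  qed
qed

end


context lh begin

lemma par_exists:
  assumes q: "\<forall>f\<in>S. card f = q" and dv: "card (Dv S p) = q+1"
    and f: "f\<in>S" and pf: "p\<notin>f"
  shows "\<exists>L\<in>Dv S p. L\<inter>f = {}"
proof (rule ccontr)
  assume "\<not> ?thesis"
  then have all: "\<forall>L\<in>Dv S p. L\<inter>f \<noteq> {}" by simp
  define g where "g L = (SOME y. y \<in> L\<inter>f)" for L
  have gin: "g L \<in> L\<inter>f" if "L\<in>Dv S p" for L
    unfolding g_def using all that by (meson ex_in_conv someI_ex)
  have "inj_on g (Dv S p)"
  proof (rule inj_onI)
    fix L1 L2 assume L: "L1\<in>Dv S p" "L2\<in>Dv S p" "g L1 = g L2"
    show "L1 = L2"
    proof (rule ccontr)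
      assume ne: "L1 \<noteq> L2"
      have L1: "L1\<in>S" "p\<in>L1" and L2: "L2\<in>S" "p\<in>L2" using L by (auto simp: Dv_def)
      have "L1\<inter>L2 = {p}" using meet1[OF L1(1) L2(1) ne L1(2) L2(2)] .
      moreover have "g L1 \<in> L1\<inter>L2" using gin[OF L(1)] gin[OF L(2)] L(3) by simp
      moreover have "g L1 \<in> f" using gin[OF L(1)] by simp
      ultimately show False using pf by simp
    qed
  qed
  moreover have "g ` Dv S p \<subseteq> f" using gin by auto
  ultimately have "card (Dv S p) \<le> card f" using card_inj_on_le finE f by blast
  then show False using dv q f by simp
qed

lemma par_unique:
  assumes q: "\<forall>f\<in>S. card f = q" and dv: "card (Dv S x) = q+1"
    and cov: "\<forall>y\<in>V. \<exists>f\<in>Dv S x. y\<in>f"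
    and L: "L\<in>S" and xL: "x\<notin>L" and f: "f\<in>Dv S x" and g: "g\<in>Dv S x"
    and fL: "f\<inter>L = {}" and gL: "g\<inter>L = {}"
  shows "f = g"
proof (rule ccontr)
  assume fg: "f \<noteq> g"
  define M where "M = {h\<in>Dv S x. h\<inter>L \<noteq> {}}"
  define hh where "hh y = (SOME h. h\<in>Dv S x \<and> y\<in>h)" for y
  have hin: "hh y \<in> Dv S x \<and> y \<in> hh y" if "y\<in>L" for y
  proof -
    have "y\<in>V" using sub L that by auto
    then have "\<exists>h. h\<in>Dv S x \<and> y\<in>h" using cov by auto
    then show ?thesis unfolding hh_def by (rule someI_ex)
  qed
  have "inj_on hh L"
  proof (rule inj_onI)
    fix y1 y2 assume y: "y1\<in>L" "y2\<in>L" "hh y1 = hh y2"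
    show "y1 = y2"
    proof (rule ccontr)
      assume ne: "y1 \<noteq> y2"
      define H where "H = hh y1"
      have H: "H\<in>S" "x\<in>H" "y1\<in>H" "y2\<in>H" using hin[OF y(1)] hin[OF y(2)] y(3)
        unfolding H_def Dv_def by auto
      have "H \<noteq> L" using H(2) xL by auto
      then have "card (H\<inter>L) \<le> 1" using lin H(1) L by simp
      moreover have "{y1,y2} \<subseteq> H\<inter>L" using H y by auto
      moreover have "finite (H\<inter>L)" using finE L by simp
      ultimately have "card {y1,y2} \<le> 1" using card_mono[of "H\<inter>L" "{y1,y2}"] by linarith
      then show False using ne by simp
    qed
  qed
  moreover have "hh ` L \<subseteq> M" unfolding M_def using hin by blast
  moreover have finD: "finite (Dv S x)" using finS by (simp add: Dv_def)
  moreover have "finite M" unfolding M_def using finD by simp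
  ultimately have cM: "card L \<le> card M" using card_inj_on_le by blast
  have "M \<union> {f,g} \<subseteq> Dv S x" unfolding M_def using f g by auto
  moreover have "M \<inter> {f,g} = {}" unfolding M_def using fL gL by (auto simp: Int_commute)
  moreover have "finite M" unfolding M_def using finD by simp
  ultimately have "card M + 2 \<le> card (Dv S x)"
  proof -
    assume sub2: "M \<union> {f,g} \<subseteq> Dv S x" and dj: "M \<inter> {f,g} = {}" and finM: "finite M"
    have c2: "card {f,g} = 2" using fg by simp
    have "card (M \<union> {f,g}) = card M + 2" using card_Un_disjoint[OF finM _ dj] c2 by simp
    then show ?thesis using card_mono[OF finD sub2] by simp
  qed
  then show False using cM q L dv by simp
qed

lemma affine_color:
  assumes q2: "2 \<le> q" and nq: "n = q*q" and q: "\<forall>f\<in>S. card f = q"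
    and dv: "\<forall>x\<in>V. card (Dv S x) = q+1" and cov: "\<forall>x\<in>V. \<forall>y\<in>V. \<exists>f\<in>Dv S x. y\<in>f"
    and Sne: "S \<noteq> {}"
  shows "\<exists>c. proper_edge_coloring S n c"
proof -
  obtain e where e: "e\<in>S" using Sne by auto
  obtain p where p: "p\<in>e" using nempty[OF e] by auto
  have pV: "p\<in>V" using sub e p by auto
  have finD: "finite (Dv S p)" using finS by (simp add: Dv_def)
  obtain idx where idx: "bij_betw idx (Dv S p) {0..<card (Dv S p)}"
    using ex_bij_betw_finite_nat[OF finD] by blast
  define Lf where "Lf f = (SOME L. L\<in>Dv S p \<and> (L = f \<or> L\<inter>f = {}))" for f
  have Lf: "Lf f \<in> Dv S p \<and> (Lf f = f \<or> Lf f \<inter> f = {})" if f: "f\<in>S" for f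
  proof -
    have "\<exists>L. L\<in>Dv S p \<and> (L = f \<or> L\<inter>f = {})"
    proof (cases "p\<in>f")
      case True then show ?thesis using f by (auto simp: Dv_def)
    next
      case False then show ?thesis using par_exists[OF q dv[rule_format, OF pV] f] by blast
    qed
    then show ?thesis unfolding Lf_def by (rule someI_ex)
  qed
  define c where "c f = idx (Lf f)" for f
  have "proper_edge_coloring S n c"
    unfolding proper_edge_coloring_def
  proof (intro conjI ballI impI)
    fix f assume f: "f\<in>S"
    have "idx (Lf f) \<in> {0..<card (Dv S p)}" using Lf[OF f] bij_betwE[OF idx] by blast
    then have "c f < card (Dv S p)" unfolding c_def by simp
    moreover have "q + 1 \<le> q*q"
    proof -
      have h2: "2*q \<le> q*q" using q2 by (rule mult_le_mono1)
      then show ?thesis using q2 by linarith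
    qed
    ultimately show "c f < n" using dv pV nq by simp
  next
    fix f g assume f: "f\<in>S" and g: "g\<in>S" and fg: "f \<noteq> g \<and> f \<inter> g \<noteq> {}"
    show "c f \<noteq> c g"
    proof
      assume "c f = c g"
      then have LL: "Lf f = Lf g" unfolding c_def
        using inj_onD[OF bij_betw_imp_inj_on[OF idx]] Lf[OF f] Lf[OF g] by blast
      define L where "L = Lf f"
      have Lf1: "L\<in>Dv S p" "L = f \<or> L\<inter>f = {}" using Lf[OF f] L_def by auto
      have Lg1: "L = g \<or> L\<inter>g = {}" using Lf[OF g] L_def LL by auto
      obtain x where x: "x\<in>f" "x\<in>g" using fg by auto
      show False
      proof (cases "L = f")
        case True
        then show False using Lg1 fg x by auto
      next
        case False
        then have Lf0: "L\<inter>f = {}" using Lf1 by simp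
        show False
        proof (cases "L = g")
          case True then show False using Lf0 x by auto
        next
          case False
          then have Lg0: "L\<inter>g = {}" using Lg1 by simp
          have LS: "L\<in>S" using Lf1 by (simp add: Dv_def)
          have xV: "x\<in>V" using sub f x by auto
          have xL: "x\<notin>L" using Lf0 x by auto
          have "f = g" using par_unique[OF q dv[rule_format, OF xV] bspec[OF cov xV] LS xL]
              f g x Lf0 Lg0 by (auto simp: Dv_def Int_commute)
          then show False using fg by simp
        qed
      qed
    qed
  qed
  then show ?thesis by blast
qed

end


lemma lh_sub: assumes "lh V S n" "S' \<subseteq> S" shows "lh V S' n"
proof -
  interpret lh V S n by (rule assms(1))
  show ?thesis
  proof
    show "finite V" by (rule finV)
    show "card V = n" by (rule cardV)
    show "finite S'" using finite_subset[OF assms(2) finS] .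
    show "e \<subseteq> V" if "e\<in>S'" for e using sub assms(2) that by blast
    show "e \<noteq> {}" if "e\<in>S'" for e using nempty assms(2) that by blast
    show "card (e\<inter>f) \<le> 1" if "e\<in>S'" "f\<in>S'" "e\<noteq>f" for e f
      using lin assms(2) that by blast
  qed
qed

lemma col_all:
  "lh V S n \<Longrightarrow> \<forall>f\<in>S. n \<le> card f * card f \<Longrightarrow> \<exists>c. proper_edge_coloring S n c"
proof (induction "card S" arbitrary: S rule: less_induct)
  case less
  interpret lh V S n by (rule less.prems(1))
  show ?case
  proof (cases "S = {}")
    case True
    then show ?thesis unfolding proper_edge_coloring_def by auto
  next
    case Sne: False
    define k where "k = Min (card ` S)"
    have kb: "\<forall>f\<in>S. k \<le> card f" unfolding k_def using finS by simp
    have "k \<in> card ` S" unfolding k_def using finS Sne by simp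
    then obtain e0 where e0: "e0\<in>S" "card e0 = k" by auto
    have sq: "n \<le> k*k" using less.prems(2) e0 by auto
    show ?thesis
    proof (cases "\<exists>e\<in>S. card e = k \<and> card (Nb S e) < n")
      case True
      then obtain e where e: "e\<in>S" "card (Nb S e) < n" by blast
      have "lh V (S - {e}) n" using lh_sub[OF less.prems(1)] by blast
      moreover have "card (S - {e}) < card S" using card_Diff1_less[OF finS e(1)] .
      ultimately obtain c where c: "proper_edge_coloring (S - {e}) n c"
        using less.hyps less.prems(2) by blast
      have "card (c ` Nb S e) < n" using e card_image_le[of "Nb S e" c] finS
        by (metis (no_types, lifting) Nb_def finite_subset le_less_trans mem_Collect_eq subsetI)
      then have "\<not> {0..<n} \<subseteq> c ` Nb S e"
        using card_mono[of "c ` Nb S e" "{0..<n}"] finite_imageI finS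
        by (metis (no_types, lifting) Nb_def card_atLeastLessThan diff_zero finite_subset leD mem_Collect_eq subsetI)
      then obtain j where j0: "j \<in> {0..<n}" "j \<notin> c ` Nb S e" by blast
      then have j: "j < n" "j \<notin> c ` Nb S e" by auto
      define c' where "c' = c(e := j)"
      have "proper_edge_coloring S n c'"
        unfolding proper_edge_coloring_def
      proof (intro conjI ballI impI)
        fix f assume "f\<in>S" then show "c' f < n"
          using c j unfolding c'_def proper_edge_coloring_def by auto
      next
        fix f g assume f: "f\<in>S" and g: "g\<in>S" and fg: "f \<noteq> g \<and> f \<inter> g \<noteq> {}"
        show "c' f \<noteq> c' g"
        proof (cases "f = e")
          case True
          then have "g \<in> Nb S e" using g fg unfolding Nb_def by auto
          then show ?thesis using True j fg unfolding c'_def by auto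
        next
          case fe: False
          show ?thesis
          proof (cases "g = e")
            case True
            then have "f \<in> Nb S e" using f fg unfolding Nb_def by auto
            then show ?thesis using True fe j unfolding c'_def by force
          next
            case False
            then show ?thesis using fe f g fg c unfolding c'_def proper_edge_coloring_def by auto
          qed
        qed
      qed
      then show ?thesis by blast
    next
      case False
      then have degs: "\<forall>e\<in>S. card e = k \<longrightarrow> n \<le> card (Nb S e)" by auto
      note ex0 = extremal[OF e0(1) kb e0(2) sq degs[rule_format, OF e0]]
      obtain v0 where v0: "v0\<in>e0" using nempty[OF e0(1)] by auto
      have allk: "\<forall>h\<in>S. card h = k"
      proof
        fix h assume h: "h\<in>S"
        obtain x where x: "x\<in>h" using nempty[OF h] by auto
        have xV: "x\<in>V" using sub h x by auto
        obtain f where f: "f\<in>Dv S v0" "x\<in>f" using ex0(3) v0 xV by blast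
        have fS: "f\<in>S" and fk: "card f = k" using f ex0(3) v0 by (auto simp: Dv_def)
        note exf = extremal[OF fS kb fk sq degs[rule_format, OF fS fk]]
        have "h \<in> Dv S x" using h x by (simp add: Dv_def)
        then show "card h = k" using exf(3) f(2) by blast
      qed
      have vx: "card (Dv S x) = k+1 \<and> (\<forall>y\<in>V. \<exists>f\<in>Dv S x. y\<in>f)" if xV: "x\<in>V" for x
      proof -
        obtain f where f: "f\<in>Dv S v0" "x\<in>f" using ex0(3) v0 xV by blast
        have fS: "f\<in>S" using f by (auto simp: Dv_def)
        note exf = extremal[OF fS kb allk[rule_format, OF fS] sq degs[rule_format, OF fS allk[rule_format, OF fS]]]
        then show ?thesis using f(2) by blast
      qed
      show ?thesis
        using affine_color[OF ex0(2) ex0(1)[symmetric] allk] vx Sne by blast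
    qed
  qed
qed


theorem corollary5p6:
  fixes V :: "'a set" and E :: "'a set set" and n :: nat
  assumes "linear_hypergraph V E"
    and "card V = n"
    and "antirank E \<ge> ereal (sqrt (real n))"
  shows "chromatic_index E \<le> n"
proof -
  have finE: "finite E" using assms(1) unfolding linear_hypergraph_def hypergraph_def by simp
  have lhV: "lh V E n"
  proof
    show "finite V" using assms(1) unfolding linear_hypergraph_def hypergraph_def by simp
    show "card V = n" by (rule assms(2))
    show "finite E" by (rule finE)
    show "e \<subseteq> V" if "e\<in>E" for e using assms(1) that unfolding linear_hypergraph_def hypergraph_def by simp
    show "e \<noteq> {}" if "e\<in>E" for e using assms(1) that unfolding linear_hypergraph_def hypergraph_def by simp
    show "card (e\<inter>f) \<le> 1" if "e\<in>E" "f\<in>E" "e\<noteq>f" for e f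
      using assms(1) that unfolding linear_hypergraph_def by simp
  qed
  have ex: "\<exists>c. proper_edge_coloring E n c"
  proof (cases "E = {}")
    case True then show ?thesis unfolding proper_edge_coloring_def by auto
  next
    case False
    have "ereal (sqrt (real n)) \<le> ereal (real (Min (card ` E)))"
      using assms(3) False unfolding antirank_def by simp
    then have m: "sqrt (real n) \<le> real (Min (card ` E))" by simp
    have "\<forall>f\<in>E. n \<le> card f * card f"
    proof
      fix f assume f: "f\<in>E"
      have "Min (card ` E) \<le> card f" using finE f by simp
      then have "real (Min (card ` E)) \<le> real (card f)" by simp
      then have "sqrt (real n) \<le> real (card f)" using m by linarith
      then have "real n \<le> (real (card f))\<^sup>2" by (rule sqrt_le_D)
      then have "real n \<le> real (card f * card f)" by (simp add: power2_eq_square)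
      then show "n \<le> card f * card f" by (simp only: of_nat_le_iff)
    qed
    then show ?thesis using col_all[OF lhV] by blast
  qed
  then obtain c where "proper_edge_coloring E n c" by blast
  then show ?thesis unfolding chromatic_index_def by (rule Least_le[where P="\<lambda>k. \<exists>c. proper_edge_coloring E k c", OF exI])
qed

end
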